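(* Let $n$ be odd and squarefree, with $\Omega(n)\geq 3$ and every prime divisor of $n$ at least $7$. Then a sequence in $\mathbb{Z}_n$ is an $S(n)$-extremal sequence for the Davenport constant if and only if it is a $U(n)$-extremal sequence for the Davenport constant.
   Context: $\mathbb{Z}_n$ is the integers mod $n$, $U(n)$ its unit group. For nonempty $A\subseteq\mathbb{Z}_n\setminus\{0\}$, a sequence $(x_1,\ldots,x_k)$ is an $A$-weighted zero-sum sequence if $\sum a_ix_i=0$ for some $a_i\in A$; $D_A(n)$ is the least $k$ such that every length-$k$ sequence in $\mathbb{Z}_n$ has a nonempty $A$-weighted zero-sum subsequence; an $A$-extremal sequence for the Davenport constant is a sequence of length $D_A(n)-1$ with no $A$-weighted zero-sum subsequence. $\Omega(n)$ is the number of prime factors with multiplicity. For odd $n=\prod p_i^{r_i}$ and $a\in U(n)$, $\left(\frac{a}{n}\right)=\prod\left(\frac{a}{p_i}\right)^{r_i}$ (Legendre symbols of images mod $p_i$), and $S(n)$ is the kernel of $a\mapsto\left(\frac{a}{n}\right)$ on $U(n)$. *)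

theory Defs
  imports "HOL-Number_Theory.Number_Theory" "HOL-Computational_Algebra.Squarefree"
begin

text \<open>Elements of Z_n are represented by naturals in {0..<n}; a sequence in Z_n is a
list xs with set xs contained in {..<n}.\<close>

definition Zn_seq :: "nat \<Rightarrow> nat list \<Rightarrow> bool" where
  "Zn_seq n xs \<longleftrightarrow> set xs \<subseteq> {..<n}"

definition has_wzs_subseq :: "nat \<Rightarrow> nat set \<Rightarrow> nat list \<Rightarrow> bool" where
  "has_wzs_subseq n A xs \<longleftrightarrow>
     (\<exists>I w. I \<subseteq> {..<length xs} \<and> I \<noteq> {} \<and> (\<forall>i\<in>I. w i \<in> A) \<and>
            (\<Sum>i\<in>I. w i * xs ! i) mod n = 0)"

definition davenportA :: "nat \<Rightarrow> nat set \<Rightarrow> nat" where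
  "davenportA n A = (LEAST k. \<forall>xs. Zn_seq n xs \<and> length xs = k \<longrightarrow> has_wzs_subseq n A xs)"

definition extremal_seq :: "nat \<Rightarrow> nat set \<Rightarrow> nat list \<Rightarrow> bool" where
  "extremal_seq n A xs \<longleftrightarrow> Zn_seq n xs \<and> length xs = davenportA n A - 1 \<and>
     \<not> has_wzs_subseq n A xs"

definition unitsZ :: "nat \<Rightarrow> nat set" where
  "unitsZ n = {a. 0 < a \<and> a < n \<and> coprime a n}"

definition jacobi :: "nat \<Rightarrow> nat \<Rightarrow> int" where
  "jacobi a n = (\<Prod>p\<in>prime_factors n. Legendre (int a) (int p) ^ multiplicity p n)"

definition Sn :: "nat \<Rightarrow> nat set" where
  "Sn n = {a \<in> unitsZ n. jacobi a n = 1}"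

definition bigOmega :: "nat \<Rightarrow> nat" where
  "bigOmega n = size (prime_factorization n)"

end

theory Submission
  imports Defs "HOL-Number_Theory.Number_Theory"
begin

lemma Leg_cong: assumes "[a = b] (mod p)" shows "Legendre a p = Legendre b p"
proof -
  have 1: "[a = 0] (mod p) \<longleftrightarrow> [b = 0] (mod p)" using assms cong_sym cong_trans by metis
  have 2: "QuadRes p a \<longleftrightarrow> QuadRes p b" unfolding QuadRes_def
  proof
    assume "\<exists>y. [y\<^sup>2 = a] (mod p)" then obtain y where "[y\<^sup>2 = a] (mod p)" by blast
    then have "[y\<^sup>2 = b] (mod p)" using assms by (rule cong_trans)
    then show "\<exists>y. [y\<^sup>2 = b] (mod p)" by blast
  next
    assume "\<exists>y. [y\<^sup>2 = b] (mod p)" then obtain y where "[y\<^sup>2 = b] (mod p)" by blast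
    then have "[y\<^sup>2 = a] (mod p)" using assms cong_sym cong_trans by metis
    then show "\<exists>y. [y\<^sup>2 = a] (mod p)" by blast
  qed
  show ?thesis unfolding Legendre_def using 1 2 by simp
qed

lemma Leg_zero_iff: "Legendre a p = 0 \<longleftrightarrow> p dvd a"
  by (simp add: Legendre_def cong_0_iff)

lemma Leg_vals: "Legendre a p \<in> {-1,0,1}"
  by (simp add: Legendre_def)

lemma Leg_nz: "\<not> p dvd a \<Longrightarrow> Legendre a p = 1 \<or> Legendre a p = -1"
  by (simp add: Legendre_def cong_0_iff)

lemma Leg_sq: "\<not> p dvd a \<Longrightarrow> Legendre a p * Legendre a p = 1"
  using Leg_nz by fastforce

lemma Leg_mult:
  fixes p :: nat
  assumes "prime p" "2 < p"
  shows "Legendre (a*b) (int p) = Legendre a (int p) * Legendre b (int p)"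
proof -
  have e: "[Legendre x (int p) = x ^ ((p - 1) div 2)] (mod (int p))" for x
    using euler_criterion[OF assms] by simp
  have "[Legendre (a*b) p = (a*b) ^ ((p - 1) div 2)] (mod p)" by (rule e)
  also have "(a*b) ^ ((p - 1) div 2) = a ^ ((p - 1) div 2) * b ^ ((p - 1) div 2)"
    by (simp add: power_mult_distrib)
  also have "[\<dots> = Legendre a p * Legendre b p] (mod p)"
    using e[of a] e[of b] by (intro cong_mult) (auto simp: cong_sym)
  finally have c: "[Legendre (a*b) p = Legendre a p * Legendre b p] (mod p)" .
  have v1: "Legendre (a*b) p \<in> {-1,0,1}" by (rule Leg_vals)
  have v2: "Legendre a p * Legendre b p \<in> {-1,0,1}"
    using Leg_vals[of a p] Leg_vals[of b p] by auto
  from c have "p dvd (Legendre (a*b) p - Legendre a p * Legendre b p)"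
    by (simp add: cong_iff_dvd_diff)
  then obtain k :: int where k: "Legendre (a*b) p - Legendre a p * Legendre b p = p * k" by (auto elim: dvdE)
  have "k = 0"
  proof (rule ccontr)
    assume "k \<noteq> 0"
    then have "\<bar>p * k\<bar> \<ge> p" using assms by (simp add: abs_mult)
    moreover have "\<bar>Legendre (a*b) p - Legendre a p * Legendre b p\<bar> \<le> 2" using v1 v2 by auto
    ultimately show False using k assms by simp
  qed
  with k show ?thesis by simp
qed

lemma Leg_1: "p > 1 \<Longrightarrow> Legendre 1 p = 1"
  unfolding Legendre_def QuadRes_def
  by (auto simp: cong_0_iff intro: exI[of _ 1]) 

lemma Leg_square: "prime (p::nat) \<Longrightarrow> \<not> int p dvd a \<Longrightarrow> Legendre (a^2) (int p) = 1"
  unfolding Legendre_def QuadRes_def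
  by (auto simp: cong_0_iff prime_dvd_power_iff intro: exI[of _ a])

lemma nonres_exists:
  fixes p :: nat assumes "prime p" "2 < p"
  shows "\<exists>v. Legendre v (int p) = -1"
proof -
  obtain g where g: "residue_primroot p g" using prime_primitive_root_exists[OF _ assms(1)] prime_gt_1_nat[OF assms(1)] by blast
  then have ord: "ord p g = p - 1" and cop: "coprime p g"
    using assms by (auto simp: residue_primroot_def totient_prime)
  have ndvd: "\<not> int p dvd int g"
  proof
    assume "int p dvd int g"
    then have "p dvd g" by simp
    with cop have "p dvd 1" by (meson coprime_common_divisor dvd_refl)
    with assms show False by simp
  qed
  show ?thesis
  proof (rule ccontr)
    assume "\<not> ?thesis"
    then have L: "Legendre (int g) (int p) = 1" using Leg_nz[OF ndvd] by auto
    have "[Legendre (int g) (int p) = int g ^ ((p - 1) div 2)] (mod int p)"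
      using euler_criterion[OF assms] by simp
    then have "[int (g ^ ((p - 1) div 2)) = int 1] (mod int p)" using L by (simp add: cong_sym)
    then have "[g ^ ((p - 1) div 2) = 1] (mod p)" by (simp only: cong_int_iff)
    then have "ord p g dvd (p - 1) div 2" using ord_divides'[of g "(p - 1) div 2" p] by simp
    then have "p - 1 dvd (p - 1) div 2" using ord by simp
    moreover have "0 < (p - 1) div 2" "(p - 1) div 2 < p - 1" using assms by auto
    ultimately show False by (meson nat_dvd_not_less)
  qed
qed

lemma inv_exists:
  fixes p :: nat assumes "prime p" "\<not> int p dvd a"
  shows "\<exists>b. [a * b = 1] (mod int p)"
proof -
  have "prime (int p)" using assms by simp
  then have "coprime a (int p)" using assms(2) by (meson coprime_commute prime_imp_coprime)
  then show ?thesis by (rule cong_solve_coprime_int)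
qed

lemma inv_Leg:
  fixes p :: nat assumes "prime p" "2 < p" "[a * b = 1] (mod int p)"
  shows "Legendre b (int p) = Legendre a (int p)" "\<not> int p dvd b" "\<not> int p dvd a"
proof -
  have "Legendre a p * Legendre b p = 1"
    using Leg_mult[OF assms(1,2), of a b] Leg_cong[OF assms(3)] Leg_1[of "int p"] assms by (simp add: prime_gt_1_nat)
  then show "Legendre b (int p) = Legendre a (int p)"
    using Leg_vals[of a p] Leg_vals[of b p] by auto
  have nd1: "\<not> int p dvd 1" using assms(1) prime_gt_1_nat by auto
  have e: "int p dvd a * b \<longleftrightarrow> int p dvd 1" using cong_dvd_iff[OF assms(3)] .
  show "\<not> int p dvd b" "\<not> int p dvd a" using e nd1 by auto
qed

lemma small_ndvd:
  fixes p :: nat assumes "p \<ge> 7" "0 < c" "c < 7"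
  shows "\<not> int p dvd c"
  using assms zdvd_not_zless[of c "int p"] by auto

lemma pat_QQ:
  fixes p :: nat assumes "prime p" "p \<ge> 7"
  shows "\<exists>g. Legendre g (int p) = 1 \<and> Legendre (g+1) (int p) = 1"
proof -
  have p2: "2 < p" using assms by simp
  have n2: "\<not> int p dvd 2" and n3: "\<not> int p dvd 3" and n5: "\<not> int p dvd 5" and n1: "\<not> int p dvd 1"
    and n4: "\<not> int p dvd 4"
    using small_ndvd[OF assms(2), of 2] small_ndvd[OF assms(2), of 3] small_ndvd[OF assms(2), of 5]
      small_ndvd[OF assms(2), of 1] small_ndvd[OF assms(2), of 4] by simp_all
  have pi: "prime (int p)" using assms by simp
  show ?thesis
  proof (cases "Legendre 2 (int p) = 1")
    case True
    then show ?thesis using Leg_1[of "int p"] p2 by (intro exI[of _ 1]) auto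
  next
    case F2: False
    show ?thesis
    proof (cases "Legendre 5 (int p) = 1")
      case True
      have "Legendre (2^2) (int p) = 1" using Leg_square[OF assms(1) n2] .
      then show ?thesis using True by (intro exI[of _ 4]) auto
    next
      case False
      have l2: "Legendre 2 (int p) = -1" using F2 Leg_nz[OF n2] by auto
      have l5: "Legendre 5 (int p) = -1" using False Leg_nz[OF n5] by auto
      have "Legendre (2*5) (int p) = 1" using Leg_mult[OF assms(1) p2, of 2 5] l2 l5 by simp
      moreover have "Legendre (3^2) (int p) = 1" using Leg_square[OF assms(1) n3] .
      ultimately show ?thesis by (intro exI[of _ 9]) auto
    qed
  qed
qed

lemma pat_QN:
  fixes p :: nat assumes "prime p" "p \<ge> 7"
  shows "\<exists>g. Legendre g (int p) = 1 \<and> Legendre (g+1) (int p) = -1"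
proof -
  have p2: "2 < p" using assms by simp
  obtain v where v: "Legendre v (int p) = -1" using nonres_exists[OF assms(1) p2] by blast
  define v' where "v' = nat (v mod int p)"
  have "[v = int v'] (mod int p)" unfolding v'_def using p2
    by (simp add: cong_def)
  then have v'L: "Legendre (int v') (int p) = -1" using Leg_cong v by metis
  define Q where "Q = (\<lambda>m::nat. 0 < m \<and> Legendre (int m) (int p) = -1)"
  have v'pos: "0 < v'"
  proof (rule ccontr)
    assume "\<not> 0 < v'" then have "v' = 0" by simp
    then have "Legendre (int v') (int p) = 0" by (simp add: Leg_zero_iff)
    with v'L show False by simp
  qed
  have Qv: "Q v'" using v'L v'pos by (simp add: Q_def)
  define m where "m = (LEAST m. Q m)"
  have Qm: "Q m" unfolding m_def using Qv by (rule LeastI)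
  have mle: "m \<le> v'" unfolding m_def using Qv by (rule Least_le)
  have v'lt: "v' < p" unfolding v'_def using p2 by (subst nat_less_iff) auto
  have m1: "m \<noteq> 1" using Qm Leg_1[of "int p"] p2 by (auto simp: Q_def)
  have m0: "0 < m" using Qm by (simp add: Q_def)
  have nQ: "\<not> Q (m - 1)" unfolding m_def
    by (rule not_less_Least) (use m0 m_def in auto)
  have nd: "\<not> int p dvd int (m - 1)"
    using m0 m1 mle v'lt zdvd_not_zless[of "int (m - 1)" "int p"] by auto
  have "Legendre (int (m - 1)) (int p) = 1" using nQ Leg_nz[OF nd] m0 m1 by (auto simp: Q_def)
  moreover have "int (m - 1) + 1 = int m" using m0 by simp
  ultimately show ?thesis using Qm by (intro exI[of _ "int (m - 1)"]) (auto simp: Q_def)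
qed

lemma Leg_neg: "prime p \<Longrightarrow> 2 < p \<Longrightarrow> Legendre (- a) (int p) = Legendre (-1) (int p) * Legendre a (int p)"
  using Leg_mult[of p "-1" a] by simp

lemma reflect_pat:
  fixes p :: nat assumes "prime p" "2 < p"
  shows "Legendre (-1-g) (int p) = Legendre (-1) (int p) * Legendre (g+1) (int p)"
        "Legendre ((-1-g)+1) (int p) = Legendre (-1) (int p) * Legendre g (int p)"
  using Leg_neg[OF assms, of "g+1"] Leg_neg[OF assms, of g] by (simp_all add: algebra_simps)

lemma invert_pat:
  fixes p :: nat assumes "prime p" "2 < p" "\<not> int p dvd g" "\<not> int p dvd (g+1)"
  shows "\<exists>h. Legendre h (int p) = Legendre g (int p) \<and>
             Legendre (h+1) (int p) = Legendre g (int p) * Legendre (g+1) (int p)"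
proof -
  obtain b where b: "[g * b = 1] (mod int p)" using inv_exists[OF assms(1,3)] by blast
  have Lb: "Legendre b (int p) = Legendre g (int p)" using inv_Leg[OF assms(1,2) b] by simp
  have c1: "[b * (g + 1) = g * b + b] (mod int p)" by (simp add: algebra_simps)
  have c2: "[g * b + b = 1 + b] (mod int p)" by (rule cong_add[OF b cong_refl])
  have c3: "[b * (g + 1) = b + 1] (mod int p)" using cong_trans[OF c1 c2] by (simp add: add.commute)
  have "Legendre (b+1) (int p) = Legendre (b * (g+1)) (int p)" using Leg_cong[OF c3] by simp
  also have "\<dots> = Legendre b (int p) * Legendre (g+1) (int p)" by (rule Leg_mult[OF assms(1,2)])
  finally have "Legendre (b+1) (int p) = Legendre b (int p) * Legendre (g+1) (int p)" .
  then show ?thesis using Lb by (intro exI[of _ b]) simp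
qed

lemma Leg_ndvd: assumes "Legendre a p = 1 \<or> Legendre a p = -1" shows "\<not> p dvd a"
proof
  assume "p dvd a" then have "Legendre a p = 0" by (simp add: Leg_zero_iff)
  with assms show False by auto
qed

lemma pattern:
  fixes p :: nat assumes "prime p" "p \<ge> 7" "e1 = 1 \<or> e1 = -1" "e2 = 1 \<or> e2 = -1"
  shows "\<exists>g. Legendre g (int p) = e1 \<and> Legendre (g+1) (int p) = e2"
proof -
  have p2: "2 < p" using assms by simp
  have m1: "Legendre (-1) (int p) = 1 \<or> Legendre (-1) (int p) = -1"
    using Leg_nz[of "int p" "-1"] p2 by auto
  obtain g1 where g1: "Legendre g1 (int p) = 1" "Legendre (g1+1) (int p) = 1" using pat_QQ[OF assms(1,2)] by blast
  obtain g2 where g2: "Legendre g2 (int p) = 1" "Legendre (g2+1) (int p) = -1" using pat_QN[OF assms(1,2)] by blast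
  have NQ: "\<exists>g. Legendre g (int p) = -1 \<and> Legendre (g+1) (int p) = 1"
   and NN: "\<exists>g. Legendre g (int p) = -1 \<and> Legendre (g+1) (int p) = -1"
  proof -
    have "(\<exists>g. Legendre g (int p) = -1 \<and> Legendre (g+1) (int p) = 1) \<and>
          (\<exists>g. Legendre g (int p) = -1 \<and> Legendre (g+1) (int p) = -1)"
    proof (cases "Legendre (-1) (int p) = 1")
      case True
      have a: "Legendre (-1-g2) (int p) = -1" "Legendre ((-1-g2)+1) (int p) = 1"
        using reflect_pat[OF assms(1) p2, of g2] True g2 by auto
      obtain h where "Legendre h (int p) = -1" "Legendre (h+1) (int p) = -1"
        using invert_pat[OF assms(1) p2, of "-1-g2"] a Leg_ndvd[of "-1-g2" "int p"] Leg_ndvd[of "-1-g2+1" "int p"]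
        by auto
      then show ?thesis using a by blast
    next
      case False
      then have F: "Legendre (-1) (int p) = -1" using m1 by auto
      have a: "Legendre (-1-g1) (int p) = -1" "Legendre ((-1-g1)+1) (int p) = -1"
        using reflect_pat[OF assms(1) p2, of g1] F g1 by auto
      obtain h where "Legendre h (int p) = -1" "Legendre (h+1) (int p) = 1"
        using invert_pat[OF assms(1) p2, of "-1-g1"] a Leg_ndvd[of "-1-g1" "int p"] Leg_ndvd[of "-1-g1+1" "int p"]
        by auto
      then show ?thesis using a by blast
    qed
    then show "\<exists>g. Legendre g (int p) = -1 \<and> Legendre (g+1) (int p) = 1"
      "\<exists>g. Legendre g (int p) = -1 \<and> Legendre (g+1) (int p) = -1" by blast+
  qed
  from assms(3) show ?thesis
  proof
    assume e1: "e1 = 1"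
    from assms(4) show ?thesis
    proof
      assume "e2 = 1" then show ?thesis using e1 g1 by blast
    next
      assume "e2 = -1" then show ?thesis using e1 g2 by blast
    qed
  next
    assume e1: "e1 = -1"
    from assms(4) show ?thesis
    proof
      assume "e2 = 1" then show ?thesis using e1 NQ by simp
    next
      assume "e2 = -1" then show ?thesis using e1 NN by simp
    qed
  qed
qed

definition sg1 :: "int \<Rightarrow> bool" where "sg1 x \<longleftrightarrow> x = 1 \<or> x = -1"

lemma sg1_mult: "sg1 x \<Longrightarrow> sg1 y \<Longrightarrow> sg1 (x*y)"
  unfolding sg1_def by auto

lemma sg1_Leg: "\<not> p dvd a \<Longrightarrow> sg1 (Legendre a p)"
  unfolding sg1_def using Leg_nz by blast

lemma sg1_ndvd: "sg1 (Legendre a p) \<Longrightarrow> \<not> p dvd a"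
  unfolding sg1_def using Leg_ndvd by blast

lemma rep_exists:
  fixes p :: nat assumes "prime p" "2 < p"
  shows "\<exists>R. \<forall>e. sg1 e \<longrightarrow> Legendre (R e) (int p) = e"
proof -
  obtain v where v: "Legendre v (int p) = -1" using nonres_exists[OF assms] by blast
  have "Legendre 1 (int p) = 1" using Leg_1[of "int p"] assms by simp
  then show ?thesis using v by (intro exI[of _ "\<lambda>e. if e = 1 then 1 else v"]) (auto simp: sg1_def)
qed

lemma two_sum:
  fixes p :: nat assumes p: "prime p" "p \<ge> 7" and y: "\<not> int p dvd y1" "\<not> int p dvd y2"
    and t: "\<not> int p dvd t" and e: "sg1 e1" "sg1 e2"
  shows "\<exists>a1 a2. Legendre a1 (int p) = e1 \<and> Legendre a2 (int p) = e2 \<and> [a1*y1 + a2*y2 = t] (mod int p)"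
proof -
  have p2: "2 < p" using p by simp
  obtain z1 where z1: "[y1 * z1 = 1] (mod int p)" using inv_exists[OF p(1) y(1)] by blast
  obtain z2 where z2: "[y2 * z2 = 1] (mod int p)" using inv_exists[OF p(1) y(2)] by blast
  have Lz1: "Legendre z1 (int p) = Legendre y1 (int p)" using inv_Leg[OF p(1) p2 z1] by simp
  have Lz2: "Legendre z2 (int p) = Legendre y2 (int p)" using inv_Leg[OF p(1) p2 z2] by simp
  define A where "A = Legendre (-1) (int p)"
  define B where "B = Legendre t (int p)"
  define C1 where "C1 = Legendre y1 (int p)"
  define C2 where "C2 = Legendre y2 (int p)"
  have sA: "sg1 A" unfolding A_def using p2 by (intro sg1_Leg) simp
  have sB: "sg1 B" unfolding B_def using t by (intro sg1_Leg)
  have sC1: "sg1 C1" unfolding C1_def using y by (intro sg1_Leg)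
  have sC2: "sg1 C2" unfolding C2_def using y by (intro sg1_Leg)
  have s1: "sg1 (e1 * A * B * C1)" using e sA sB sC1 by (intro sg1_mult)
  have s2: "sg1 (e2 * B * C2)" using e sB sC2 by (intro sg1_mult)
  obtain g where g: "Legendre g (int p) = e1 * A * B * C1" "Legendre (g+1) (int p) = e2 * B * C2"
    using pattern[OF p, of "e1 * A * B * C1" "e2 * B * C2"] s1 s2 unfolding sg1_def by blast
  define a1 where "a1 = (-1) * g * t * z1"
  define a2 where "a2 = (g + 1) * t * z2"
  have La1: "Legendre a1 (int p) = A * (e1 * A * B * C1) * B * C1"
  proof -
    have "Legendre a1 (int p) = Legendre (-1) (int p) * Legendre g (int p) * Legendre t (int p) * Legendre z1 (int p)"
      unfolding a1_def by (simp only: Leg_mult[OF p(1) p2])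
    then show ?thesis using g Lz1 A_def B_def C1_def by simp
  qed
  have La2: "Legendre a2 (int p) = (e2 * B * C2) * B * C2"
  proof -
    have "Legendre a2 (int p) = Legendre (g+1) (int p) * Legendre t (int p) * Legendre z2 (int p)"
      unfolding a2_def by (simp only: Leg_mult[OF p(1) p2])
    then show ?thesis using g Lz2 B_def C2_def by simp
  qed
  have "A * (e1 * A * B * C1) * B * C1 = e1" using sA sB sC1 unfolding sg1_def by auto
  moreover have "(e2 * B * C2) * B * C2 = e2" using sB sC2 unfolding sg1_def by auto
  moreover have "[a1*y1 + a2*y2 = t] (mod int p)"
  proof -
    have "[((-1) * g * t) * (y1 * z1) + ((g + 1) * t) * (y2 * z2) = ((-1) * g * t) * 1 + ((g + 1) * t) * 1] (mod int p)"
      by (intro cong_add cong_mult cong_refl z1 z2)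
    moreover have "a1*y1 + a2*y2 = ((-1) * g * t) * (y1 * z1) + ((g + 1) * t) * (y2 * z2)"
      unfolding a1_def a2_def by (simp add: algebra_simps)
    moreover have "((-1) * g * t) * 1 + ((g + 1) * t) * 1 = t" by (simp add: algebra_simps)
    ultimately show ?thesis by simp
  qed
  ultimately show ?thesis using La1 La2 by (intro exI[of _ a1] exI[of _ a2]) simp
qed

lemma three_sum:
  fixes p :: nat assumes p: "prime p" "p \<ge> 7" and y: "\<not> int p dvd y1" "\<not> int p dvd y2" "\<not> int p dvd y3"
    and e: "sg1 e1" "sg1 e2" "sg1 e3"
  shows "\<exists>a1 a2 a3. Legendre a1 (int p) = e1 \<and> Legendre a2 (int p) = e2 \<and> Legendre a3 (int p) = e3 \<and>
           [a1*y1 + a2*y2 + a3*y3 = t] (mod int p)"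
proof -
  have p2: "2 < p" using p by simp
  obtain R where R: "\<And>e. sg1 e \<Longrightarrow> Legendre (R e) (int p) = e" using rep_exists[OF p(1) p2] by blast
  have fin: "\<exists>a1 a2 a3. Legendre a1 (int p) = e1 \<and> Legendre a2 (int p) = e2 \<and> Legendre a3 (int p) = e3 \<and>
           [a1*y1 + a2*y2 + a3*y3 = t] (mod int p)"
    if h1: "Legendre a3 (int p) = e3" and h2: "\<not> int p dvd (t - a3 * y3)" for a3
  proof -
    obtain a1 a2 where a: "Legendre a1 (int p) = e1" "Legendre a2 (int p) = e2"
        "[a1*y1 + a2*y2 = t - a3 * y3] (mod int p)"
      using two_sum[OF p y(1,2) h2 e(1,2)] by blast
    have "[a1*y1 + a2*y2 + a3*y3 = (t - a3 * y3) + a3 * y3] (mod int p)"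
      using a(3) by (intro cong_add cong_refl)
    then have "[a1*y1 + a2*y2 + a3*y3 = t] (mod int p)" by simp
    then show ?thesis using a h1 by blast
  qed
  show ?thesis
  proof (cases "int p dvd (t - R e3 * y3)")
    case False
    then show ?thesis using fin[of "R e3"] R[OF e(3)] by blast
  next
    case True
    have n3: "\<not> int p dvd 3" using small_ndvd[OF p(2), of 3] by simp
    have n2: "\<not> int p dvd 2" using small_ndvd[OF p(2), of 2] by simp
    have nR: "\<not> int p dvd R e3" using R[OF e(3)] e(3) by (intro sg1_ndvd) simp
    have pi: "prime (int p)" using p by simp
    have nd3: "\<not> int p dvd (3 * R e3 * y3)" using n3 nR y(3) pi by (simp add: prime_dvd_mult_iff)
    have nd: "\<not> int p dvd (t - (4 * R e3) * y3)"
    proof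
      assume h: "int p dvd (t - (4 * R e3) * y3)"
      have "3 * R e3 * y3 = (t - R e3 * y3) - (t - (4 * R e3) * y3)" by (simp add: algebra_simps)
      then have "int p dvd (3 * R e3 * y3)" using True h by (metis dvd_diff)
      with nd3 show False by contradiction
    qed
    have "Legendre (4 * R e3) (int p) = Legendre (2^2) (int p) * Legendre (R e3) (int p)"
      using Leg_mult[OF p(1) p2] by simp
    also have "\<dots> = e3" using Leg_square[OF p(1) n2] R[OF e(3)] by simp
    finally show ?thesis using fin[of "4 * R e3"] nd by blast
  qed
qed

lemma three_elems:
  assumes "card N \<ge> 3"
  shows "\<exists>u v w. u \<in> N \<and> v \<in> N \<and> w \<in> N \<and> u \<noteq> v \<and> u \<noteq> w \<and> v \<noteq> w"
proof -
  have fN: "finite N" using assms card.infinite by force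
  have "card N > 0" using assms by simp
  then have "N \<noteq> {}" by (simp add: card_gt_0_iff)
  then obtain u where u: "u \<in> N" by blast
  have c1: "card (N - {u}) \<ge> 2" using assms u fN by (simp add: card_Diff_singleton)
  then have "card (N - {u}) > 0" by simp
  then have "N - {u} \<noteq> {}" by (simp add: card_gt_0_iff)
  then obtain v where v: "v \<in> N - {u}" by blast
  have c2: "card (N - {u} - {v}) \<ge> 1" using c1 v fN by (simp add: card_Diff_singleton)
  then have "card (N - {u} - {v}) > 0" by simp
  then have "N - {u} - {v} \<noteq> {}" by (simp add: card_gt_0_iff)
  then obtain w where w: "w \<in> N - {u} - {v}" by blast
  show ?thesis using u v w by blast
qed

lemma loc_all:
  fixes p :: nat and y :: "nat \<Rightarrow> int"
  assumes p: "prime p" "p \<ge> 7" and fin: "finite T"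
    and N3: "card {i\<in>T. \<not> int p dvd y i} \<ge> 3" and e: "\<forall>i\<in>T. sg1 (e i)"
  shows "\<exists>a. (\<forall>i\<in>T. Legendre (a i) (int p) = e i) \<and> int p dvd (\<Sum>i\<in>T. a i * y i)"
proof -
  have p2: "2 < p" using p by simp
  obtain u v w where uvw: "u \<in> {i\<in>T. \<not> int p dvd y i}" "v \<in> {i\<in>T. \<not> int p dvd y i}"
     "w \<in> {i\<in>T. \<not> int p dvd y i}" "u \<noteq> v" "u \<noteq> w" "v \<noteq> w"
    using three_elems[OF N3] by blast
  obtain R where R: "\<And>e. sg1 e \<Longrightarrow> Legendre (R e) (int p) = e" using rep_exists[OF p(1) p2] by blast
  define T' where "T' = T - {u,v,w}"
  define s where "s = (\<Sum>i\<in>T'. R (e i) * y i)"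
  obtain a1 a2 a3 where a: "Legendre a1 (int p) = e u" "Legendre a2 (int p) = e v" "Legendre a3 (int p) = e w"
    "[a1 * y u + a2 * y v + a3 * y w = - s] (mod int p)"
    using three_sum[OF p, of "y u" "y v" "y w" "e u" "e v" "e w" "- s"] uvw e by auto
  define a where "a = (\<lambda>i. if i = u then a1 else if i = v then a2 else if i = w then a3 else R (e i))"
  have L: "\<forall>i\<in>T. Legendre (a i) (int p) = e i"
    using a R e uvw unfolding a_def by auto
  have Tsplit: "T = {u,v,w} \<union> T'" using uvw unfolding T'_def by auto
  have disj: "{u,v,w} \<inter> T' = {}" unfolding T'_def by auto
  have "(\<Sum>i\<in>T. a i * y i) = (\<Sum>i\<in>{u,v,w}. a i * y i) + (\<Sum>i\<in>T'. a i * y i)"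
    using fin disj Tsplit by (metis finite_Un sum.union_disjoint)
  also have "(\<Sum>i\<in>{u,v,w}. a i * y i) = a1 * y u + a2 * y v + a3 * y w"
    using uvw unfolding a_def by (simp add: algebra_simps)
  also have "(\<Sum>i\<in>T'. a i * y i) = s" unfolding s_def a_def T'_def by (intro sum.cong) auto
  finally have eq: "(\<Sum>i\<in>T. a i * y i) = a1 * y u + a2 * y v + a3 * y w + s" .
  have "int p dvd (a1 * y u + a2 * y v + a3 * y w - (- s))" using a(4) by (simp add: cong_iff_dvd_diff)
  then have "int p dvd (\<Sum>i\<in>T. a i * y i)" using eq by simp
  then show ?thesis using L by blast
qed

lemma loc_two:
  fixes p :: nat and y :: "nat \<Rightarrow> int"
  assumes p: "prime p" "p \<ge> 7" and fin: "finite T"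
    and N2: "{i\<in>T. \<not> int p dvd y i} = {i0, j}" and ij: "i0 \<noteq> j" and e: "\<forall>i\<in>T. sg1 (e i)"
  shows "\<exists>a. (\<forall>i\<in>T-{j}. Legendre (a i) (int p) = e i) \<and> (\<forall>i\<in>T. \<not> int p dvd a i) \<and>
             int p dvd (\<Sum>i\<in>T. a i * y i)"
proof -
  have p2: "2 < p" using p by simp
  have pi: "prime (int p)" using p by simp
  have i0T: "i0 \<in> T" "\<not> int p dvd y i0" and jT: "j \<in> T" "\<not> int p dvd y j" using N2 by blast+
  have others: "\<And>i. i \<in> T \<Longrightarrow> i \<noteq> i0 \<Longrightarrow> i \<noteq> j \<Longrightarrow> int p dvd y i" using N2 by blast
  obtain R where R: "\<And>e. sg1 e \<Longrightarrow> Legendre (R e) (int p) = e" using rep_exists[OF p(1) p2] by blast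
  define s where "s = (\<Sum>i\<in>T-{j}. R (e i) * y i)"
  have s_split: "s = R (e i0) * y i0 + (\<Sum>i\<in>T-{j}-{i0}. R (e i) * y i)"
    unfolding s_def using fin i0T ij by (subst sum.remove[of _ i0]) auto
  have rest: "int p dvd (\<Sum>i\<in>T-{j}-{i0}. R (e i) * y i)"
    by (intro dvd_sum) (use others in auto)
  have nR: "\<not> int p dvd R (e i0)" using R e i0T by (intro sg1_ndvd) simp
  have nRy: "\<not> int p dvd R (e i0) * y i0" using nR i0T pi by (simp add: prime_dvd_mult_iff)
  have ns: "\<not> int p dvd s"
  proof
    assume "int p dvd s"
    then have "int p dvd (s - (\<Sum>i\<in>T-{j}-{i0}. R (e i) * y i))" using rest by (rule dvd_diff)
    then show False using nRy s_split by simp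
  qed
  obtain z where z: "[y j * z = 1] (mod int p)" using inv_exists[OF p(1) jT(2)] by blast
  have nz: "\<not> int p dvd z" using inv_Leg[OF p(1) p2 z] by simp
  define a where "a = (\<lambda>i. if i = j then - s * z else R (e i))"
  have L: "\<forall>i\<in>T-{j}. Legendre (a i) (int p) = e i" using R e unfolding a_def by auto
  have NZ: "\<forall>i\<in>T. \<not> int p dvd a i"
  proof
    fix i assume i: "i \<in> T"
    show "\<not> int p dvd a i"
    proof (cases "i = j")
      case True
      then show ?thesis using ns nz pi unfolding a_def by (simp add: prime_dvd_mult_iff)
    next
      case False
      then show ?thesis using R e i unfolding a_def by (intro sg1_ndvd) simp
    qed
  qed
  have "(\<Sum>i\<in>T. a i * y i) = a j * y j + (\<Sum>i\<in>T-{j}. a i * y i)"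
    using fin jT by (subst sum.remove[of _ j]) auto
  also have "(\<Sum>i\<in>T-{j}. a i * y i) = s" unfolding s_def a_def by (intro sum.cong) auto
  finally have eq: "(\<Sum>i\<in>T. a i * y i) = - s * (y j * z - 1)" unfolding a_def by (simp add: algebra_simps)
  have "int p dvd (y j * z - 1)" using z by (simp add: cong_iff_dvd_diff)
  then have "int p dvd (\<Sum>i\<in>T. a i * y i)" unfolding eq by simp
  then show ?thesis using L NZ by blast
qed

lemma loc_zero:
  fixes p :: nat and y :: "nat \<Rightarrow> int"
  assumes p: "prime p" "p \<ge> 7" and N0: "{i\<in>T. \<not> int p dvd y i} = {}" and e: "\<forall>i\<in>T. sg1 (e i)"
  shows "\<exists>a. (\<forall>i\<in>T. Legendre (a i) (int p) = e i) \<and> int p dvd (\<Sum>i\<in>T. a i * y i)"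
proof -
  have p2: "2 < p" using p by simp
  obtain R where R: "\<And>e. sg1 e \<Longrightarrow> Legendre (R e) (int p) = e" using rep_exists[OF p(1) p2] by blast
  have "int p dvd (\<Sum>i\<in>T. R (e i) * y i)" using N0 by (intro dvd_sum) auto
  then show ?thesis using R e by (intro exI[of _ "\<lambda>i. R (e i)"]) auto
qed

lemma Leg1_ndvd: "Legendre a p = 1 \<Longrightarrow> \<not> p dvd a"
  using Leg_ndvd by blast

lemma loc_exist:
  fixes p :: nat and y :: "nat \<Rightarrow> int"
  assumes p: "prime p" "p \<ge> 7" and fin: "finite T"
    and N: "card {i\<in>T. \<not> int p dvd y i} \<noteq> 1"
  shows "\<exists>a. (\<forall>i\<in>T. \<not> int p dvd a i) \<and> (i0 \<in> T \<longrightarrow> Legendre (a i0) (int p) = 1) \<and>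
             int p dvd (\<Sum>i\<in>T. a i * y i)"
proof -
  have e: "\<forall>i\<in>T. sg1 ((\<lambda>_. 1) i)" by (simp add: sg1_def)
  have finN: "finite {i\<in>T. \<not> int p dvd y i}" using fin by simp
  consider "card {i\<in>T. \<not> int p dvd y i} = 0" | "card {i\<in>T. \<not> int p dvd y i} = 2"
    | "card {i\<in>T. \<not> int p dvd y i} \<ge> 3" using N by linarith
  then show ?thesis
  proof cases
    case 1
    then have "{i\<in>T. \<not> int p dvd y i} = {}" using finN by simp
    from loc_zero[OF p this e] obtain a where a: "\<forall>i\<in>T. Legendre (a i) (int p) = 1"
      "int p dvd (\<Sum>i\<in>T. a i * y i)" by auto
    have "\<forall>i\<in>T. \<not> int p dvd a i"
    proof
      fix i assume "i \<in> T"
      then have "Legendre (a i) (int p) = 1" using a(1) by blast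
      then show "\<not> int p dvd a i" by (rule Leg1_ndvd)
    qed
    then show ?thesis using a by (intro exI[of _ a]) simp
  next
    case 3
    from loc_all[OF p fin this e] obtain a where a: "\<forall>i\<in>T. Legendre (a i) (int p) = 1"
      "int p dvd (\<Sum>i\<in>T. a i * y i)" by auto
    have "\<forall>i\<in>T. \<not> int p dvd a i"
    proof
      fix i assume "i \<in> T"
      then have "Legendre (a i) (int p) = 1" using a(1) by blast
      then show "\<not> int p dvd a i" by (rule Leg1_ndvd)
    qed
    then show ?thesis using a by (intro exI[of _ a]) simp
  next
    case 2
    then obtain u v where uv: "{i\<in>T. \<not> int p dvd y i} = {u, v}" "u \<noteq> v"
      by (auto simp: card_2_iff)
    obtain k j where kj: "{i\<in>T. \<not> int p dvd y i} = {k, j}" "k \<noteq> j" "j \<noteq> i0"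
    proof (cases "u = i0")
      case True then show ?thesis using that[of u v] uv by auto
    next
      case False then show ?thesis using that[of v u] uv by (auto simp: insert_commute)
    qed
    from loc_two[OF p fin kj(1,2) e] obtain a where a: "\<forall>i\<in>T-{j}. Legendre (a i) (int p) = 1"
      "\<forall>i\<in>T. \<not> int p dvd a i" "int p dvd (\<Sum>i\<in>T. a i * y i)" by auto
    then show ?thesis using kj(3) by (intro exI[of _ a]) auto
  qed
qed

lemma pf_prime: "p \<in> prime_factors n \<Longrightarrow> prime p" by auto
lemma pf_dvd: "p \<in> prime_factors (n::nat) \<Longrightarrow> p dvd n" by (simp add: in_prime_factors_iff)

lemma sqf_mult1:
  assumes "squarefree (n::nat)" "p \<in> prime_factors n"
  shows "multiplicity p n = 1"
proof -
  have "n \<noteq> 0"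
  proof
    assume "n = 0" with assms(1) show False by simp
  qed
  then show ?thesis using squarefree_factorial_semiring'[of n] assms by blast
qed

lemma sqf_dvd:
  assumes sq: "squarefree (n::nat)" and d: "\<forall>p\<in>prime_factors n. p dvd m"
  shows "n dvd m"
proof (cases "m = 0")
  case True then show ?thesis by simp
next
  case False
  have n0: "n \<noteq> 0"
  proof
    assume "n = 0" with sq show False by simp
  qed
  show ?thesis
  proof (rule multiplicity_le_imp_dvd[OF n0])
    fix p :: nat assume pp: "prime p"
    have le1: "multiplicity p n \<le> 1" using squarefree_factorial_semiring''[OF n0] sq pp by blast
    show "multiplicity p n \<le> multiplicity p m"
    proof (cases "multiplicity p n = 0")
      case True then show ?thesis by simp
    next
      case F: False
      then have "p \<in> prime_factors n" using pp by (simp add: prime_factors_multiplicity)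
      then have "p dvd m" using d by blast
      then have "multiplicity p m > 0" using pp False by (simp add: prime_multiplicity_gt_zero_iff)
      then show ?thesis using le1 by linarith
    qed
  qed
qed

lemma coprime_pf:
  assumes n0: "(n::nat) \<noteq> 0" and nd: "\<forall>p\<in>prime_factors n. \<not> p dvd w"
  shows "coprime w n"
proof (rule ccontr)
  assume nc: "\<not> coprime w n"
  have "gcd w n \<noteq> 1" using nc coprime_iff_gcd_eq_1 by blast
  then have "\<exists>q. prime q \<and> q dvd gcd w n" by (rule prime_factor_nat)
  then obtain q where q: "prime q" "q dvd gcd w n" by blast
  have "q dvd w" "q dvd n" using q(2) by simp_all
  then have "q \<in> prime_factors n" using q n0 by (simp add: in_prime_factors_iff)
  then show False using nd \<open>q dvd w\<close> by blast
qed

lemma card_pf: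
  assumes "squarefree (n::nat)"
  shows "card (prime_factors n) = bigOmega n"
proof -
  have "bigOmega n = (\<Sum>p\<in>prime_factors n. count (prime_factorization n) p)"
    unfolding bigOmega_def by (rule size_multiset_overloaded_eq)
  also have "\<dots> = (\<Sum>p\<in>prime_factors n. 1)"
  proof (rule sum.cong)
    fix p assume p: "p \<in> prime_factors n"
    then show "count (prime_factorization n) p = 1"
      using sqf_mult1[OF assms p] by (simp add: count_prime_factorization_prime[OF pf_prime[OF p]])
  qed simp
  finally show ?thesis by simp
qed

lemma global_S:
  fixes n :: nat and xs :: "nat list" and a :: "nat \<Rightarrow> nat \<Rightarrow> int"
  assumes sq: "squarefree n" and n1: "n > 1"
    and T: "T \<subseteq> {..<length xs}" "T \<noteq> {}"
    and a: "\<forall>p\<in>prime_factors n. (\<forall>i\<in>T. \<not> int p dvd a p i) \<and> int p dvd (\<Sum>i\<in>T. a p i * int (xs!i))"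
    and L: "\<forall>i\<in>T. (\<Prod>p\<in>prime_factors n. Legendre (a p i) (int p)) = 1"
  shows "has_wzs_subseq n (Sn n) xs"
proof -
  define P where "P = prime_factors n"
  have finP: "finite P" unfolding P_def by simp
  have n0: "n \<noteq> 0" using n1 by simp
  have cop: "\<forall>p\<in>P. \<forall>q\<in>P. p \<noteq> q \<longrightarrow> coprime (id p) (id q)"
    unfolding P_def by (auto intro: primes_coprime)
  have "\<forall>i. \<exists>x. \<forall>p\<in>P. [x = nat (a p i mod int p)] (mod id p)"
  proof
    fix i show "\<exists>x. \<forall>p\<in>P. [x = nat (a p i mod int p)] (mod id p)"
      using chinese_remainder_nat[OF finP cop, of "\<lambda>p. nat (a p i mod int p)"] by blast
  qed
  then have "\<exists>w0. \<forall>i. \<forall>p\<in>P. [w0 i = nat (a p i mod int p)] (mod id p)" by (rule choice)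
  then obtain w0 where w0': "\<forall>i. \<forall>p\<in>P. [w0 i = nat (a p i mod int p)] (mod id p)"
    by blast
  have w0: "\<And>i. \<forall>p\<in>P. [w0 i = nat (a p i mod int p)] (mod p)" using w0' by simp
  define w where "w i = w0 i mod n" for i
  have key: "[int (w i) = a p i] (mod int p)" if p: "p \<in> P" for p i
  proof -
    have pd: "p dvd n" using p unfolding P_def by (simp add: pf_dvd)
    have pp: "p > 0" using p unfolding P_def using prime_gt_0_nat by auto
    have "[w i = w0 i] (mod p)" unfolding w_def cong_def using pd by (simp add: mod_mod_cancel)
    also have "[w0 i = nat (a p i mod int p)] (mod p)" using w0 p by blast
    finally have "[int (w i) = int (nat (a p i mod int p))] (mod int p)" by (simp only: cong_int_iff)
    moreover have "int (nat (a p i mod int p)) = a p i mod int p" using pp by simp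
    ultimately have c1: "[int (w i) = a p i mod int p] (mod int p)" by simp
    have c2: "[a p i mod int p = a p i] (mod int p)" by (simp add: cong_def)
    show ?thesis by (rule cong_trans[OF c1 c2])
  qed
  have ndw: "\<not> p dvd w i" if p: "p \<in> P" and i: "i \<in> T" for p i
  proof
    assume "p dvd w i"
    then have "int p dvd int (w i)" by simp
    then have "int p dvd a p i" using cong_dvd_iff[OF key[OF p, of i]] by simp
    then show False using a p i unfolding P_def by blast
  qed
  obtain q where q: "prime q" "q dvd n" using prime_factor_nat[of n] n1 by auto
  have qP: "q \<in> P" unfolding P_def using q n0 by (simp add: in_prime_factors_iff)
  have wS: "w i \<in> Sn n" if i: "i \<in> T" for i
  proof -
    have "w i \<noteq> 0"
    proof
      assume "w i = 0" then have "q dvd w i" by simp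
      with ndw[OF qP i] show False by contradiction
    qed
    moreover have "w i < n" unfolding w_def using n0 by simp
    moreover have "coprime (w i) n" using coprime_pf[OF n0] ndw i unfolding P_def by blast
    moreover have "jacobi (w i) n = 1"
    proof -
      have "jacobi (w i) n = (\<Prod>p\<in>P. Legendre (a p i) (int p))"
        unfolding jacobi_def P_def
      proof (rule prod.cong)
        fix p assume p: "p \<in> prime_factors n"
        then have "Legendre (int (w i)) (int p) = Legendre (a p i) (int p)"
          using key[of p i] Leg_cong unfolding P_def by blast
        then show "Legendre (int (w i)) (int p) ^ multiplicity p n = Legendre (a p i) (int p)"
          using sqf_mult1[OF sq p] by simp
      qed simp
      then show ?thesis using L i unfolding P_def by simp
    qed
    ultimately show ?thesis unfolding Sn_def unitsZ_def by simp
  qed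
  have sum: "(\<Sum>i\<in>T. w i * xs ! i) mod n = 0"
  proof -
    have "n dvd (\<Sum>i\<in>T. w i * xs ! i)"
    proof (rule sqf_dvd[OF sq], rule ballI)
      fix p assume p: "p \<in> prime_factors n"
      then have pP: "p \<in> P" unfolding P_def .
      have "[(\<Sum>i\<in>T. int (w i) * int (xs ! i)) = (\<Sum>i\<in>T. a p i * int (xs ! i))] (mod int p)"
        by (intro cong_sum cong_mult key[OF pP] cong_refl)
      moreover have "int p dvd (\<Sum>i\<in>T. a p i * int (xs ! i))" using a p by blast
      ultimately have "int p dvd (\<Sum>i\<in>T. int (w i) * int (xs ! i))" using cong_dvd_iff by blast
      then have "int p dvd int (\<Sum>i\<in>T. w i * xs ! i)" by simp
      then show "p dvd (\<Sum>i\<in>T. w i * xs ! i)" by (simp only: of_nat_dvd_iff)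
    qed
    then show ?thesis by simp
  qed
  have wS': "\<forall>i\<in>T. w i \<in> Sn n" using wS by blast
  show ?thesis unfolding has_wzs_subseq_def
    using T wS' sum by (intro exI[of _ T] exI[of _ w]) simp
qed

lemma sg1_prod: "finite A \<Longrightarrow> (\<forall>x\<in>A. sg1 (f x)) \<Longrightarrow> sg1 (\<Prod>x\<in>A. f x)"
proof (induction A rule: finite_induct)
  case empty then show ?case by (simp add: sg1_def)
next
  case (insert x F) then show ?case by (simp add: sg1_mult)
qed

lemma sg1_sq: "sg1 x \<Longrightarrow> x * x = 1" unfolding sg1_def by auto

lemma caseI:
  fixes n :: nat and xs :: "nat list"
  assumes sq: "squarefree n" and n1: "n > 1" and p7: "\<forall>p\<in>prime_factors n. p \<ge> 7"
    and T: "T \<subseteq> {..<length xs}" "T \<noteq> {}"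
    and c: "\<forall>p\<in>prime_factors n. card {i\<in>T. \<not> int p dvd int (xs!i)} \<noteq> 1"
    and p0: "p0 \<in> prime_factors n" "card {i\<in>T. \<not> int p0 dvd int (xs!i)} \<ge> 3"
  shows "has_wzs_subseq n (Sn n) xs"
proof -
  define P where "P = prime_factors n"
  have finP: "finite P" unfolding P_def by simp
  have finT: "finite T" using T(1) finite_subset by blast
  have pr: "\<And>p. p \<in> P \<Longrightarrow> prime p \<and> p \<ge> 7" using p7 unfolding P_def by auto
  have "\<forall>p\<in>P. \<exists>b. (\<forall>i\<in>T. \<not> int p dvd b i) \<and> int p dvd (\<Sum>i\<in>T. b i * int (xs!i))"
  proof
    fix p assume p: "p \<in> P"
    from loc_exist[of p T "\<lambda>i. int (xs!i)" 0] pr[OF p] finT c p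
    show "\<exists>b. (\<forall>i\<in>T. \<not> int p dvd b i) \<and> int p dvd (\<Sum>i\<in>T. b i * int (xs!i))"
      unfolding P_def by blast
  qed
  then obtain b where b: "\<forall>p\<in>P. (\<forall>i\<in>T. \<not> int p dvd b p i) \<and> int p dvd (\<Sum>i\<in>T. b p i * int (xs!i))"
    by (metis (no_types) bchoice)
  define e where "e i = (\<Prod>p\<in>P-{p0}. Legendre (b p i) (int p))" for i
  have se: "\<forall>i\<in>T. sg1 (e i)"
  proof
    fix i assume i: "i \<in> T"
    have "\<forall>p\<in>P-{p0}. sg1 (Legendre (b p i) (int p))" using b i sg1_Leg by blast
    then show "sg1 (e i)" unfolding e_def using finP by (intro sg1_prod) auto
  qed
  have p0P: "p0 \<in> P" using p0 unfolding P_def by simp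
  obtain a0 where a0: "\<forall>i\<in>T. Legendre (a0 i) (int p0) = e i" "int p0 dvd (\<Sum>i\<in>T. a0 i * int (xs!i))"
    using loc_all[of p0 T "\<lambda>i. int (xs!i)" e] pr[OF p0P] finT p0(2) se by blast
  define a where "a p i = (if p = p0 then a0 i else b p i)" for p i
  have A: "\<forall>p\<in>prime_factors n. (\<forall>i\<in>T. \<not> int p dvd a p i) \<and> int p dvd (\<Sum>i\<in>T. a p i * int (xs!i))"
  proof
    fix p assume p: "p \<in> prime_factors n"
    show "(\<forall>i\<in>T. \<not> int p dvd a p i) \<and> int p dvd (\<Sum>i\<in>T. a p i * int (xs!i))"
    proof (cases "p = p0")
      case True
      have "\<forall>i\<in>T. \<not> int p dvd a p i"
      proof
        fix i assume i: "i \<in> T"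
        have "sg1 (Legendre (a0 i) (int p0))" using a0(1) se i by simp
        then show "\<not> int p dvd a p i" using True unfolding a_def by (simp add: sg1_ndvd)
      qed
      then show ?thesis using a0(2) True unfolding a_def by simp
    next
      case False
      then show ?thesis using b p unfolding a_def P_def by simp
    qed
  qed
  have L: "\<forall>i\<in>T. (\<Prod>p\<in>prime_factors n. Legendre (a p i) (int p)) = 1"
  proof
    fix i assume i: "i \<in> T"
    have "(\<Prod>p\<in>prime_factors n. Legendre (a p i) (int p)) =
          Legendre (a p0 i) (int p0) * (\<Prod>p\<in>P-{p0}. Legendre (a p i) (int p))"
      unfolding P_def using p0(1) by (simp add: prod.remove)
    also have "(\<Prod>p\<in>P-{p0}. Legendre (a p i) (int p)) = e i"
      unfolding e_def a_def by (intro prod.cong) auto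
    also have "Legendre (a p0 i) (int p0) = e i" using a0(1) i unfolding a_def by simp
    finally show "(\<Prod>p\<in>prime_factors n. Legendre (a p i) (int p)) = 1"
      using sg1_sq se i by simp
  qed
  show ?thesis by (rule global_S[OF sq n1 T A L])
qed

lemma caseII:
  fixes n :: nat and xs :: "nat list"
  assumes sq: "squarefree n" and n1: "n > 1" and p7: "\<forall>p\<in>prime_factors n. p \<ge> 7"
    and T: "T \<subseteq> {..<length xs}" "T \<noteq> {}"
    and c: "\<forall>p\<in>prime_factors n. card {i\<in>T. \<not> int p dvd int (xs!i)} \<noteq> 1"
    and F: "\<forall>i\<in>T. \<forall>j\<in>T. (\<forall>p\<in>prime_factors n. \<not> p dvd xs!i) \<and> (\<forall>p\<in>prime_factors n. \<not> p dvd xs!j) \<longrightarrow> i = j"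
  shows "has_wzs_subseq n (Sn n) xs"
proof -
  define P where "P = prime_factors n"
  have finP: "finite P" unfolding P_def by simp
  have finT: "finite T" using T(1) finite_subset by blast
  have pr: "\<And>p. p \<in> P \<Longrightarrow> prime p \<and> p \<ge> 7" using p7 unfolding P_def by auto
  define full where "full i \<longleftrightarrow> (\<forall>p\<in>P. \<not> p dvd xs!i)" for i
  define i0 where "i0 = (SOME i. i \<in> T \<and> full i)"
  have i0: "\<And>i. i \<in> T \<Longrightarrow> full i \<Longrightarrow> i = i0"
  proof -
    fix i assume i: "i \<in> T" "full i"
    then have "\<exists>i. i \<in> T \<and> full i" by blast
    then have "i0 \<in> T \<and> full i0" unfolding i0_def by (rule someI_ex)
    then show "i = i0" using F i unfolding full_def P_def by blast
  qed
  have "\<forall>p\<in>P. \<exists>b. (\<forall>i\<in>T. \<not> int p dvd b i) \<and> (i0 \<in> T \<longrightarrow> Legendre (b i0) (int p) = 1) \<and>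
           int p dvd (\<Sum>i\<in>T. b i * int (xs!i))"
  proof
    fix p assume p: "p \<in> P"
    from loc_exist[of p T "\<lambda>i. int (xs!i)" i0] pr[OF p] finT c p
    show "\<exists>b. (\<forall>i\<in>T. \<not> int p dvd b i) \<and> (i0 \<in> T \<longrightarrow> Legendre (b i0) (int p) = 1) \<and>
           int p dvd (\<Sum>i\<in>T. b i * int (xs!i))"
      unfolding P_def by blast
  qed
  then obtain b where b: "\<forall>p\<in>P. (\<forall>i\<in>T. \<not> int p dvd b p i) \<and> (i0 \<in> T \<longrightarrow> Legendre (b p i0) (int p) = 1) \<and>
           int p dvd (\<Sum>i\<in>T. b p i * int (xs!i))"
    by (metis (no_types) bchoice)
  have "\<forall>p\<in>P. \<exists>R. \<forall>e. sg1 e \<longrightarrow> Legendre (R e) (int p) = e"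
  proof
    fix p assume p: "p \<in> P"
    have "2 < p" using pr[OF p] by simp
    then show "\<exists>R. \<forall>e. sg1 e \<longrightarrow> Legendre (R e) (int p) = e" using rep_exists pr[OF p] by blast
  qed
  then obtain R where R: "\<forall>p\<in>P. \<forall>e. sg1 e \<longrightarrow> Legendre (R p e) (int p) = e"
    by (metis (no_types) bchoice)
  define q where "q i = (SOME p. p \<in> P \<and> p dvd xs!i)" for i
  have q: "q i \<in> P \<and> q i dvd xs!i" if "\<not> full i" for i
  proof -
    have "\<exists>p. p \<in> P \<and> p dvd xs!i" using that unfolding full_def by blast
    then show ?thesis unfolding q_def by (rule someI_ex)
  qed
  define e where "e i = (\<Prod>p\<in>P-{q i}. Legendre (b p i) (int p))" for i
  have se: "sg1 (e i)" if i: "i \<in> T" for i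
  proof -
    have "\<forall>p\<in>P-{q i}. sg1 (Legendre (b p i) (int p))" using b i sg1_Leg by blast
    then show "sg1 (e i)" unfolding e_def using finP by (intro sg1_prod) auto
  qed
  define a where "a p i = (if \<not> full i \<and> p = q i then R p (e i) else b p i)" for p i
  have A: "\<forall>p\<in>prime_factors n. (\<forall>i\<in>T. \<not> int p dvd a p i) \<and> int p dvd (\<Sum>i\<in>T. a p i * int (xs!i))"
  proof
    fix p assume p': "p \<in> prime_factors n"
    then have p: "p \<in> P" unfolding P_def .
    have nz: "\<forall>i\<in>T. \<not> int p dvd a p i"
    proof
      fix i assume i: "i \<in> T"
      show "\<not> int p dvd a p i"
      proof (cases "\<not> full i \<and> p = q i")
        case True
        have "Legendre (R p (e i)) (int p) = e i" using R p se[OF i] by blast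
        then have "sg1 (Legendre (R p (e i)) (int p))" using se[OF i] by simp
        then show ?thesis using True unfolding a_def by (simp add: sg1_ndvd)
      next
        case False
        then have "a p i = b p i" unfolding a_def by auto
        then show ?thesis using b p i by simp
      qed
    qed
    have d: "int p dvd (\<Sum>i\<in>T. (a p i - b p i) * int (xs!i))"
    proof (rule dvd_sum)
      fix i assume i: "i \<in> T"
      show "int p dvd (a p i - b p i) * int (xs!i)"
      proof (cases "\<not> full i \<and> p = q i")
        case True
        then have "p dvd xs!i" using q by blast
        then show ?thesis by simp
      next
        case False
        then have "a p i = b p i" unfolding a_def by auto
        then show ?thesis by simp
      qed
    qed
    have "(\<Sum>i\<in>T. a p i * int (xs!i)) = (\<Sum>i\<in>T. (a p i - b p i) * int (xs!i)) + (\<Sum>i\<in>T. b p i * int (xs!i))"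
      by (simp add: sum.distrib[symmetric] algebra_simps)
    moreover have "int p dvd (\<Sum>i\<in>T. b p i * int (xs!i))" using b p by blast
    ultimately have "int p dvd (\<Sum>i\<in>T. a p i * int (xs!i))" using d by simp
    then show "(\<forall>i\<in>T. \<not> int p dvd a p i) \<and> int p dvd (\<Sum>i\<in>T. a p i * int (xs!i))" using nz by blast
  qed
  have L: "\<forall>i\<in>T. (\<Prod>p\<in>prime_factors n. Legendre (a p i) (int p)) = 1"
  proof
    fix i assume i: "i \<in> T"
    show "(\<Prod>p\<in>prime_factors n. Legendre (a p i) (int p)) = 1"
    proof (cases "full i")
      case True
      then have ii: "i = i0" using i0 i by blast
      have "(\<Prod>p\<in>prime_factors n. Legendre (a p i) (int p)) = (\<Prod>p\<in>P. (1::int))"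
        unfolding P_def
      proof (rule prod.cong)
        fix p assume p: "p \<in> prime_factors n"
        then show "Legendre (a p i) (int p) = 1" using b True ii i unfolding a_def P_def by simp
      qed simp
      then show ?thesis by simp
    next
      case False
      have qi: "q i \<in> P" using q[OF False] by blast
      have "(\<Prod>p\<in>prime_factors n. Legendre (a p i) (int p)) =
          Legendre (a (q i) i) (int (q i)) * (\<Prod>p\<in>P-{q i}. Legendre (a p i) (int p))"
        unfolding P_def using qi unfolding P_def by (simp add: prod.remove)
      also have "(\<Prod>p\<in>P-{q i}. Legendre (a p i) (int p)) = e i"
        unfolding e_def a_def by (intro prod.cong) auto
      also have "Legendre (a (q i) i) (int (q i)) = e i" using R qi se[OF i] False unfolding a_def by simp
      finally show ?thesis using sg1_sq se[OF i] by simp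
    qed
  qed
  show ?thesis by (rule global_S[OF sq n1 T A L])
qed

lemma Nconv: "{i\<in>T. \<not> int p dvd int (xs!i)} = {i\<in>T. \<not> p dvd xs!i}"
  by (simp only: of_nat_dvd_iff)

lemma keyS:
  fixes n :: nat and xs :: "nat list"
  assumes sq: "squarefree n" and n1: "n > 1" and p7: "\<forall>p\<in>prime_factors n. p \<ge> 7"
    and zn: "Zn_seq n xs" and len: "length xs \<ge> 3"
    and T0: "T0 \<subseteq> {..<length xs}" "T0 \<noteq> {}"
    and c0: "\<forall>p\<in>prime_factors n. card {i\<in>T0. \<not> p dvd xs!i} \<noteq> 1"
  shows "has_wzs_subseq n (Sn n) xs"
proof (cases "\<exists>i<length xs. xs!i = 0")
  case True
  then obtain i where i: "i < length xs" "xs!i = 0" by blast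
  have T: "{i} \<subseteq> {..<length xs}" "{i} \<noteq> {}" using i by auto
  have c: "\<forall>p\<in>prime_factors n. card {j\<in>{i}. \<not> int p dvd int (xs!j)} \<noteq> 1"
  proof
    fix p
    have "{j\<in>{i}. \<not> int p dvd int (xs!j)} = {}" using i by auto
    then show "card {j\<in>{i}. \<not> int p dvd int (xs!j)} \<noteq> 1" by (metis card.empty zero_neq_one)
  qed
  have F: "\<forall>a\<in>{i}. \<forall>b\<in>{i}. (\<forall>p\<in>prime_factors n. \<not> p dvd xs!a) \<and> (\<forall>p\<in>prime_factors n. \<not> p dvd xs!b) \<longrightarrow> a = b"
    by simp
  show ?thesis by (rule caseII[OF sq n1 p7 T c F])
next
  case False
  have n0: "n \<noteq> 0" using n1 by simp
  have ex_p: "\<exists>p\<in>prime_factors n. \<not> p dvd xs!k" if k: "k < length xs" for k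
  proof (rule ccontr)
    assume "\<not> ?thesis"
    then have d: "n dvd xs!k" using sqf_dvd[OF sq] by blast
    have lt: "xs!k < n" using zn k unfolding Zn_seq_def by (meson lessThan_iff nth_mem subsetD)
    have nz: "xs!k \<noteq> 0"
    proof
      assume "xs!k = 0" then have "\<exists>i<length xs. xs!i = 0" using k by blast
      with False show False by contradiction
    qed
    have "n \<le> xs!k" using d nz by (simp add: dvd_imp_le)
    with lt show False by simp
  qed
  show ?thesis
  proof (cases "\<exists>i1 i2. i1 < length xs \<and> i2 < length xs \<and> i1 \<noteq> i2 \<and>
                 (\<forall>p\<in>prime_factors n. \<not> p dvd xs!i1) \<and> (\<forall>p\<in>prime_factors n. \<not> p dvd xs!i2)")
    case True
    then obtain i1 i2 where ii: "i1 < length xs" "i2 < length xs" "i1 \<noteq> i2"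
      "\<forall>p\<in>prime_factors n. \<not> p dvd xs!i1" "\<forall>p\<in>prime_factors n. \<not> p dvd xs!i2" by blast
    define T where "T = {..<length xs}"
    have finT: "finite T" unfolding T_def by simp
    have "card ({..<length xs} - {i1, i2}) > 0"
    proof -
      have "card ({..<length xs} - {i1, i2}) = length xs - 2"
        using ii by (subst card_Diff_subset) auto
      then show ?thesis using len by simp
    qed
    then have "{..<length xs} - {i1, i2} \<noteq> {}" by (simp add: card_gt_0_iff)
    then obtain k where k: "k < length xs" "k \<noteq> i1" "k \<noteq> i2" by blast
    obtain p0 where p0: "p0 \<in> prime_factors n" "\<not> p0 dvd xs!k" using ex_p[OF k(1)] by blast
    have Tsub: "T \<subseteq> {..<length xs}" "T \<noteq> {}" unfolding T_def using k(1) by auto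
    have c: "\<forall>p\<in>prime_factors n. card {i\<in>T. \<not> int p dvd int (xs!i)} \<noteq> 1"
    proof
      fix p assume p: "p \<in> prime_factors n"
      have "{i1, i2} \<subseteq> {i\<in>T. \<not> p dvd xs!i}" using ii p unfolding T_def by auto
      then have "card {i1, i2} \<le> card {i\<in>T. \<not> p dvd xs!i}" using finT by (intro card_mono) auto
      then show "card {i\<in>T. \<not> int p dvd int (xs!i)} \<noteq> 1" using ii(3) by (simp only: Nconv) simp
    qed
    have c3: "card {i\<in>T. \<not> int p0 dvd int (xs!i)} \<ge> 3"
    proof -
      have "{i1, i2, k} \<subseteq> {i\<in>T. \<not> p0 dvd xs!i}" using ii p0 k unfolding T_def by auto
      then have "card {i1, i2, k} \<le> card {i\<in>T. \<not> p0 dvd xs!i}" using finT by (intro card_mono) auto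
      then show ?thesis using ii(3) k by (simp only: Nconv) simp
    qed
    show ?thesis by (rule caseI[OF sq n1 p7 Tsub c p0(1) c3])
  next
    case False
    have c: "\<forall>p\<in>prime_factors n. card {i\<in>T0. \<not> int p dvd int (xs!i)} \<noteq> 1"
      using c0 by (simp only: Nconv)
    have F: "\<forall>i\<in>T0. \<forall>j\<in>T0. (\<forall>p\<in>prime_factors n. \<not> p dvd xs!i) \<and> (\<forall>p\<in>prime_factors n. \<not> p dvd xs!j) \<longrightarrow> i = j"
      using False T0(1) by blast
    show ?thesis by (rule caseII[OF sq n1 p7 T0 c F])
  qed
qed

lemma Sn_sub: "Sn n \<subseteq> unitsZ n" unfolding Sn_def by auto
lemma has_mono: assumes "A \<subseteq> B" "has_wzs_subseq n A xs" shows "has_wzs_subseq n B xs"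
proof -
  have "\<exists>I w. I \<subseteq> {..<length xs} \<and> I \<noteq> {} \<and> (\<forall>i\<in>I. w i \<in> A) \<and>
    (\<Sum>i\<in>I. w i * xs ! i) mod n = 0" using assms(2) unfolding has_wzs_subseq_def .
  then obtain I w where I: "I \<subseteq> {..<length xs}" "I \<noteq> {}" "\<forall>i\<in>I. w i \<in> A"
    "(\<Sum>i\<in>I. w i * xs ! i) mod n = 0" by (elim exE conjE) (rule that; assumption)
  have "\<forall>i\<in>I. w i \<in> B" using I(3) assms(1) by blast
  then show ?thesis unfolding has_wzs_subseq_def using I(1,2,4) by (intro exI[of _ I] exI[of _ w]) simp
qed

lemma U_T:
  fixes n :: nat and xs :: "nat list"
  assumes h: "has_wzs_subseq n (unitsZ n) xs"
  shows "\<exists>T. T \<subseteq> {..<length xs} \<and> T \<noteq> {} \<and> (\<forall>p\<in>prime_factors n. card {i\<in>T. \<not> p dvd xs!i} \<noteq> 1)"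
proof -
  have "\<exists>I w. I \<subseteq> {..<length xs} \<and> I \<noteq> {} \<and> (\<forall>i\<in>I. w i \<in> unitsZ n) \<and>
    (\<Sum>i\<in>I. w i * xs ! i) mod n = 0" using h unfolding has_wzs_subseq_def .
  then obtain I w where I: "I \<subseteq> {..<length xs}" "I \<noteq> {}" "\<forall>i\<in>I. w i \<in> unitsZ n"
    "(\<Sum>i\<in>I. w i * xs ! i) mod n = 0" by (elim exE conjE) (rule that; assumption)
  have finI: "finite I" using I(1) finite_subset by blast
  have "\<forall>p\<in>prime_factors n. card {i\<in>I. \<not> p dvd xs!i} \<noteq> 1"
  proof (rule ballI, rule notI)
    fix p assume p: "p \<in> prime_factors n" and c1: "card {i\<in>I. \<not> p dvd xs!i} = 1"
    have pp: "prime p" using p by auto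
    have pn: "p dvd n" using p by (simp add: in_prime_factors_iff)
    from c1 obtain i where i: "{i\<in>I. \<not> p dvd xs!i} = {i}" by (rule card_1_singletonE)
    have iI: "i \<in> I" "\<not> p dvd xs!i" using i by blast+
    have rest: "p dvd (\<Sum>j\<in>I-{i}. w j * xs ! j)"
    proof (rule dvd_sum)
      fix j assume j: "j \<in> I - {i}"
      then have "p dvd xs!j" using i by blast
      then show "p dvd w j * xs ! j" by simp
    qed
    have "n dvd (\<Sum>j\<in>I. w j * xs ! j)" using I(4) by (simp add: dvd_eq_mod_eq_0)
    then have tot: "p dvd (\<Sum>j\<in>I. w j * xs ! j)" using pn by (rule dvd_trans[rotated])
    have eq: "(\<Sum>j\<in>I. w j * xs ! j) = w i * xs ! i + (\<Sum>j\<in>I-{i}. w j * xs ! j)"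
      using finI iI(1) by (rule sum.remove)
    have "p dvd w i * xs ! i + (\<Sum>j\<in>I-{i}. w j * xs ! j)" using tot unfolding eq .
    then have "p dvd w i * xs ! i" using dvd_add_left_iff[OF rest] by blast
    then have "p dvd w i \<or> p dvd xs ! i" using pp by (simp add: prime_dvd_mult_iff)
    moreover have "\<not> p dvd w i"
    proof
      assume "p dvd w i"
      moreover have "coprime (w i) n" using I(3) iI(1) unfolding unitsZ_def by blast
      ultimately have "is_unit p" using pn by (intro coprime_common_divisor[of "w i" n p])
      then show False using pp by simp
    qed
    ultimately show False using iI by blast
  qed
  then show ?thesis using I(1,2) by (intro exI[of _ I]) simp
qed

lemma greedy:
  fixes P :: "nat set" and bad :: "nat \<Rightarrow> nat \<Rightarrow> bool"
  assumes "finite P"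
  shows "finite X \<Longrightarrow> card {p\<in>P. \<exists>i\<in>X. bad p i} < card X \<Longrightarrow>
         \<exists>T\<subseteq>X. T \<noteq> {} \<and> (\<forall>p\<in>P. card {i\<in>T. bad p i} \<noteq> 1)"
proof (induction "card X" arbitrary: X rule: less_induct)
  case less
  show ?case
  proof (cases "\<forall>p\<in>P. card {i\<in>X. bad p i} \<noteq> 1")
    case True
    have "X \<noteq> {}" using less.prems by auto
    then show ?thesis using True by blast
  next
    case False
    then obtain p where p: "p \<in> P" "card {i\<in>X. bad p i} = 1" by blast
    then obtain i where i: "{i\<in>X. bad p i} = {i}" using card_1_singletonE by blast
    have iX: "i \<in> X" "bad p i" using i by blast+
    define X' where "X' = X - {i}"
    have finX': "finite X'" using less.prems unfolding X'_def by simp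
    have cX': "card X' = card X - 1" unfolding X'_def using less.prems iX by simp
    define A where "A = {q\<in>P. \<exists>j\<in>X. bad q j}"
    define A' where "A' = {q\<in>P. \<exists>j\<in>X'. bad q j}"
    have finA: "finite A" unfolding A_def using assms by simp
    have sub: "A' \<subseteq> A - {p}"
    proof
      fix q assume q: "q \<in> A'"
      then have "q \<in> A" unfolding A_def A'_def X'_def by auto
      moreover have "q \<noteq> p"
      proof
        assume "q = p"
        then obtain j where "j \<in> X'" "bad p j" using q unfolding A'_def by blast
        then have "j \<in> {i\<in>X. bad p i}" unfolding X'_def by blast
        then have "j = i" using i by blast
        then show False using \<open>j \<in> X'\<close> unfolding X'_def by blast
      qed
      ultimately show "q \<in> A - {p}" by blast
    qed
    have pA: "p \<in> A" unfolding A_def using p iX by blast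
    have "card A' \<le> card (A - {p})" using sub finA by (intro card_mono) auto
    also have "\<dots> = card A - 1" using pA finA by simp
    finally have le: "card A' \<le> card A - 1" .
    have A1: "card A \<ge> 1" using pA finA by (simp add: Suc_le_eq card_gt_0_iff) blast
    have AX: "card A < card X" using less.prems(2) unfolding A_def .
    have "card A' < card X'" using le A1 AX cX' by linarith
    moreover have "card X' < card X" using cX' AX by linarith
    ultimately obtain T where "T \<subseteq> X'" "T \<noteq> {}" "\<forall>p\<in>P. card {i\<in>T. bad p i} \<noteq> 1"
      using less.hyps[of X'] finX' unfolding A'_def by blast
    then show ?thesis unfolding X'_def by blast
  qed
qed

lemma lower:
  fixes n :: nat
  assumes sq: "squarefree n" and n1: "n > 1"
  shows "\<exists>ys. Zn_seq n ys \<and> length ys = card (prime_factors n) \<and> \<not> has_wzs_subseq n (unitsZ n) ys"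
proof -
  define P where "P = prime_factors n"
  have finP: "finite P" unfolding P_def by simp
  define ps where "ps = sorted_list_of_set P"
  define ys where "ys = map (\<lambda>p. n div p) ps"
  have lps: "length ps = card P" unfolding ps_def by simp
  have dps: "distinct ps" unfolding ps_def by simp
  have sps: "set ps = P" unfolding ps_def using finP by simp
  have prP: "\<And>p. p \<in> P \<Longrightarrow> prime p \<and> p dvd n" unfolding P_def by (auto simp: in_prime_factors_iff)
  have len: "length ys = card P" unfolding ys_def using lps by simp
  have zn: "Zn_seq n ys"
    unfolding Zn_seq_def
  proof
    fix y assume "y \<in> set ys"
    then obtain p where p: "p \<in> P" "y = n div p" unfolding ys_def using sps by auto
    have "1 < p" using prP[OF p(1)] prime_gt_1_nat by blast
    then show "y \<in> {..<n}" using p n1 by simp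
  qed
  have nohas: "\<not> has_wzs_subseq n (unitsZ n) ys"
  proof
    assume h: "has_wzs_subseq n (unitsZ n) ys"
    have "\<exists>I w. I \<subseteq> {..<length ys} \<and> I \<noteq> {} \<and> (\<forall>i\<in>I. w i \<in> unitsZ n) \<and>
      (\<Sum>i\<in>I. w i * ys ! i) mod n = 0" using h unfolding has_wzs_subseq_def .
    then obtain I w where I: "I \<subseteq> {..<length ys}" "I \<noteq> {}" "\<forall>i\<in>I. w i \<in> unitsZ n"
      "(\<Sum>i\<in>I. w i * ys ! i) mod n = 0" by (elim exE conjE) (rule that; assumption)
    have finI: "finite I" using I(1) finite_subset by blast
    obtain j where jI: "j \<in> I" using I(2) by blast
    have jl: "j < length ps" using jI I(1) unfolding ys_def by auto
    define p where "p = ps ! j"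
    have pP: "p \<in> P" unfolding p_def using jl sps nth_mem by blast
    have pp: "prime p" and pn: "p dvd n" using prP[OF pP] by auto
    have rest: "p dvd (\<Sum>i\<in>I-{j}. w i * ys ! i)"
    proof (rule dvd_sum)
      fix i assume i: "i \<in> I - {j}"
      have il: "i < length ps" using i I(1) unfolding ys_def by auto
      define q where "q = ps ! i"
      have qP: "q \<in> P" unfolding q_def using il sps nth_mem by blast
      have qp: "prime q" and qn: "q dvd n" using prP[OF qP] by auto
      have pq: "p \<noteq> q" unfolding p_def q_def using dps jl il i nth_eq_iff_index_eq by blast
      have "n = q * (n div q)" using qn by simp
      then have "p dvd q * (n div q)" using pn by simp
      then have "p dvd q \<or> p dvd (n div q)" using pp by (simp add: prime_dvd_mult_iff)
      moreover have "\<not> p dvd q" using pp qp pq primes_dvd_imp_eq by blast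
      ultimately have "p dvd n div q" by blast
      moreover have "ys ! i = n div q" unfolding ys_def q_def using il by simp
      ultimately show "p dvd w i * ys ! i" by simp
    qed
    have "n dvd (\<Sum>i\<in>I. w i * ys ! i)" using I(4) by (simp add: dvd_eq_mod_eq_0)
    then have tot: "p dvd (\<Sum>i\<in>I. w i * ys ! i)" using pn by (rule dvd_trans[rotated])
    have eq: "(\<Sum>i\<in>I. w i * ys ! i) = w j * ys ! j + (\<Sum>i\<in>I-{j}. w i * ys ! i)"
      using finI jI by (rule sum.remove)
    have "p dvd w j * ys ! j + (\<Sum>i\<in>I-{j}. w i * ys ! i)" using tot unfolding eq .
    then have "p dvd w j * ys ! j" using dvd_add_left_iff[OF rest] by blast
    then have "p dvd w j \<or> p dvd ys ! j" using pp by (simp add: prime_dvd_mult_iff)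
    moreover have "\<not> p dvd w j"
    proof
      assume "p dvd w j"
      moreover have "coprime (w j) n" using I(3) jI unfolding unitsZ_def by blast
      ultimately have "is_unit p" using pn by (intro coprime_common_divisor[of "w j" n p])
      then show False using pp by simp
    qed
    moreover have "\<not> p dvd ys ! j"
    proof
      assume "p dvd ys ! j"
      then have "p dvd n div p" unfolding ys_def p_def using jl by simp
      then have "p * p dvd p * (n div p)" by simp
      moreover have "p * (n div p) = n" using pn by simp
      ultimately have "p ^ 2 dvd n" by (simp add: power2_eq_square)
      then have "p dvd 1" using sq squarefreeD by blast
      then show False using pp by simp
    qed
    ultimately show False by blast
  qed
  show ?thesis using zn len nohas unfolding P_def by blast
qed

lemma take_has:
  assumes "has_wzs_subseq n A (take m ys)" shows "has_wzs_subseq n A ys"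
proof -
  have "\<exists>I w. I \<subseteq> {..<length (take m ys)} \<and> I \<noteq> {} \<and> (\<forall>i\<in>I. w i \<in> A) \<and>
    (\<Sum>i\<in>I. w i * (take m ys) ! i) mod n = 0" using assms unfolding has_wzs_subseq_def .
  then obtain I w where I: "I \<subseteq> {..<length (take m ys)}" "I \<noteq> {}" "\<forall>i\<in>I. w i \<in> A"
    "(\<Sum>i\<in>I. w i * (take m ys) ! i) mod n = 0" by (elim exE conjE) (rule that; assumption)
  have I1: "I \<subseteq> {..<length ys}" using I(1) by auto
  have "(\<Sum>i\<in>I. w i * (take m ys) ! i) = (\<Sum>i\<in>I. w i * ys ! i)"
    using I(1) by (intro sum.cong) auto
  then have "(\<Sum>i\<in>I. w i * ys ! i) mod n = 0" using I(4) by simp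
  then show ?thesis unfolding has_wzs_subseq_def using I1 I(2,3) by (intro exI[of _ I] exI[of _ w]) simp
qed

lemma dav_eq:
  assumes up: "\<forall>xs. Zn_seq n xs \<and> length xs = k + 1 \<longrightarrow> has_wzs_subseq n A xs"
    and low: "\<forall>m\<le>k. \<exists>xs. Zn_seq n xs \<and> length xs = m \<and> \<not> has_wzs_subseq n A xs"
  shows "davenportA n A = k + 1"
  unfolding davenportA_def
proof (rule Least_equality)
  show "\<forall>xs. Zn_seq n xs \<and> length xs = k + 1 \<longrightarrow> has_wzs_subseq n A xs" by (rule up)
next
  fix y assume y: "\<forall>xs. Zn_seq n xs \<and> length xs = y \<longrightarrow> has_wzs_subseq n A xs"
  show "k + 1 \<le> y"
  proof (rule ccontr)
    assume "\<not> k + 1 \<le> y"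
    then have "y \<le> k" by simp
    then obtain xs where "Zn_seq n xs" "length xs = y" "\<not> has_wzs_subseq n A xs" using low by blast
    then show False using y by blast
  qed
qed

theorem mainTheorem4:
  fixes n :: nat and xs :: "nat list"
  assumes "odd n" and "squarefree n" and "bigOmega n \<ge> 3"
    and "\<forall>p\<in>prime_factors n. p \<ge> 7"
  shows "extremal_seq n (Sn n) xs \<longleftrightarrow> extremal_seq n (unitsZ n) xs"
proof -
  note sq = assms(2) and p7 = assms(4)
  define k where "k = bigOmega n"
  have kc: "card (prime_factors n) = k" unfolding k_def by (rule card_pf[OF sq])
  have k3: "k \<ge> 3" unfolding k_def using assms(3) .
  have n0: "n \<noteq> 0"
  proof
    assume "n = 0" with assms(1) show False by simp
  qed
  have "n \<noteq> 1"
  proof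
    assume "n = 1" then have "k = 0" unfolding k_def bigOmega_def by simp
    with k3 show False by simp
  qed
  then have n1: "n > 1" using n0 by simp
  have upS: "\<forall>xs. Zn_seq n xs \<and> length xs = k + 1 \<longrightarrow> has_wzs_subseq n (Sn n) xs"
  proof (intro allI impI)
    fix ys assume ys: "Zn_seq n ys \<and> length ys = k + 1"
    have finP: "finite (prime_factors n)" by simp
    have "card {p\<in>prime_factors n. \<exists>i\<in>{..<length ys}. \<not> p dvd ys!i} \<le> card (prime_factors n)"
      by (intro card_mono) auto
    then have "card {p\<in>prime_factors n. \<exists>i\<in>{..<length ys}. \<not> p dvd ys!i} < card {..<length ys}"
      using kc ys by simp
    then obtain T where T: "T \<subseteq> {..<length ys}" "T \<noteq> {}"
      "\<forall>p\<in>prime_factors n. card {i\<in>T. \<not> p dvd ys!i} \<noteq> 1"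
      using greedy[OF finP, of "{..<length ys}" "\<lambda>p i. \<not> p dvd ys!i"] by auto
    show "has_wzs_subseq n (Sn n) ys"
      by (rule keyS[OF sq n1 p7 _ _ T]) (use ys k3 in auto)
  qed
  have upU: "\<forall>xs. Zn_seq n xs \<and> length xs = k + 1 \<longrightarrow> has_wzs_subseq n (unitsZ n) xs"
  proof (intro allI impI)
    fix ys assume "Zn_seq n ys \<and> length ys = k + 1"
    then have "has_wzs_subseq n (Sn n) ys" using upS by simp
    then show "has_wzs_subseq n (unitsZ n) ys" by (rule has_mono[OF Sn_sub])
  qed
  obtain ys where ys: "Zn_seq n ys" "length ys = k" "\<not> has_wzs_subseq n (unitsZ n) ys"
    using lower[OF sq n1] kc by auto
  have lowU: "\<forall>m\<le>k. \<exists>xs. Zn_seq n xs \<and> length xs = m \<and> \<not> has_wzs_subseq n (unitsZ n) xs"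
  proof (intro allI impI)
    fix m assume m: "m \<le> k"
    have "Zn_seq n (take m ys)" using ys(1) unfolding Zn_seq_def by (meson order_trans set_take_subset)
    moreover have "length (take m ys) = m" using ys(2) m by simp
    moreover have "\<not> has_wzs_subseq n (unitsZ n) (take m ys)" using ys(3) take_has by blast
    ultimately show "\<exists>xs. Zn_seq n xs \<and> length xs = m \<and> \<not> has_wzs_subseq n (unitsZ n) xs" by blast
  qed
  have lowS: "\<forall>m\<le>k. \<exists>xs. Zn_seq n xs \<and> length xs = m \<and> \<not> has_wzs_subseq n (Sn n) xs"
  proof (intro allI impI)
    fix m assume "m \<le> k"
    then obtain zs where zs: "Zn_seq n zs" "length zs = m" "\<not> has_wzs_subseq n (unitsZ n) zs"
      using lowU by auto
    have "\<not> has_wzs_subseq n (Sn n) zs"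
    proof
      assume "has_wzs_subseq n (Sn n) zs"
      then have "has_wzs_subseq n (unitsZ n) zs" by (rule has_mono[OF Sn_sub])
      with zs(3) show False by contradiction
    qed
    then show "\<exists>xs. Zn_seq n xs \<and> length xs = m \<and> \<not> has_wzs_subseq n (Sn n) xs" using zs by blast
  qed
  have DS: "davenportA n (Sn n) = k + 1" by (rule dav_eq[OF upS lowS])
  have DU: "davenportA n (unitsZ n) = k + 1" by (rule dav_eq[OF upU lowU])
  have equiv: "has_wzs_subseq n (Sn n) xs \<longleftrightarrow> has_wzs_subseq n (unitsZ n) xs"
    if zn: "Zn_seq n xs" and len: "length xs = k"
  proof
    assume "has_wzs_subseq n (Sn n) xs"
    then show "has_wzs_subseq n (unitsZ n) xs" by (rule has_mono[OF Sn_sub])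
  next
    assume "has_wzs_subseq n (unitsZ n) xs"
    then obtain T where T: "T \<subseteq> {..<length xs}" "T \<noteq> {}"
      "\<forall>p\<in>prime_factors n. card {i\<in>T. \<not> p dvd xs!i} \<noteq> 1"
      using U_T[OF \<open>has_wzs_subseq n (unitsZ n) xs\<close>] by (elim exE conjE) (rule that; assumption)
    show "has_wzs_subseq n (Sn n) xs"
      by (rule keyS[OF sq n1 p7 zn _ T]) (use len k3 in simp)
  qed
  show ?thesis unfolding extremal_seq_def DS DU using equiv by auto
qed

end
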